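(* Let $f_w\ge1$ and $q_w\ge 2f_w+1$ be integers and let $g_1,\dots,g_{h_w}\in\mathbb{R}^d$ (correct gradients). For each $j\in\{1,\dots,m\}$ let $(y^{(j)}_1,\dots,y^{(j)}_{q_w})$ be a list of vectors of $\mathbb{R}^d$ of which at least $q_w-f_w$ entries belong to $\{g_1,\dots,g_{h_w}\}$ (the others arbitrary), and let $G_j=\mathrm{MDA}_{f_w}(y^{(j)}_1,\dots,y^{(j)}_{q_w})$. Then for each $j$ there exists $r^*(j)$ with $\|G_j-g_{r^*(j)}\|_2\le D$, where $D=\max_{r,s}\|g_r-g_s\|_2$, and consequently $$\max_{j,k\in\{1,\dots,m\}}\|G_j-G_k\|_2\le 3\max_{r,s\in\{1,\dots,h_w\}}\|g_r-g_s\|_2 .$$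
   Context: Minimum–Diameter Averaging: for integers $f\ge 0$, $q\ge 2f+1$ and vectors $x_1,\dots,x_q\in\mathbb{R}^d$, $\mathrm{MDA}_f(x_1,\dots,x_q)$ is defined as follows: among all index sets $I\subset\{1,\dots,q\}$ with $|I|=q-f$, choose one, $I^*$, minimizing $\max_{i,j\in I}\|x_i-x_j\|_2$ (ties broken arbitrarily); then $\mathrm{MDA}_f(x_1,\dots,x_q)=\frac{1}{q-f}\sum_{i\in I^*}x_i$. *)

theory Defs
  imports "HOL-Analysis.Analysis"
begin

definition idx_diam :: "(nat \<Rightarrow> 'a::metric_space) \<Rightarrow> nat set \<Rightarrow> real" where
  "idx_diam x I = Max {dist (x i) (x j) | i j. i \<in> I \<and> j \<in> I}"

text \<open>G is a possible value of MDA_f(x_1,...,x_q): the average over some index set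
  I of size q - f minimizing the diameter (ties broken arbitrarily).\<close>
definition is_MDA :: "nat \<Rightarrow> nat \<Rightarrow> (nat \<Rightarrow> 'a::real_normed_vector) \<Rightarrow> 'a \<Rightarrow> bool" where
  "is_MDA f q x G \<longleftrightarrow>
     (\<exists>I. I \<subseteq> {1..q} \<and> card I = q - f \<and>
          (\<forall>J. J \<subseteq> {1..q} \<and> card J = q - f \<longrightarrow> idx_diam x I \<le> idx_diam x J) \<and>
          G = (1 / real (q - f)) *\<^sub>R (\<Sum>i\<in>I. x i))"

end

theory Submission
  imports Defs
begin

lemma finD: "finite {norm (g r' - g s) | r' s. r' \<in> {1..h::nat} \<and> s \<in> {1..h}}"
  by (rule finite_image_set2) auto

lemma memD: "a \<in> {1..h::nat} \<Longrightarrow> b \<in> {1..h} \<Longrightarrow>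
   norm (g a - g b) \<le> Max {norm (g r' - g s) | r' s. r' \<in> {1..h} \<and> s \<in> {1..h}}"
  by (rule Max_ge[OF finD]) blast

lemma one:
  fixes x :: "nat \<Rightarrow> real ^ 'd" and g :: "nat \<Rightarrow> real ^ 'd"
  assumes q: "q \<ge> 2 * f + 1"
    and H: "card {i \<in> {1..q}. x i \<in> g ` {1..h}} \<ge> q - f"
    and M: "is_MDA f q x Gj"
  shows "\<exists>r\<in>{1..h}. norm (Gj - g r) \<le> Max {norm (g r' - g s) | r' s. r' \<in> {1..h} \<and> s \<in> {1..h}}"
proof -
  define D where "D = Max {norm (g r' - g s) | r' s. r' \<in> {1..h} \<and> s \<in> {1..h}}"
  define Hs where "Hs = {i \<in> {1..q}. x i \<in> g ` {1..h}}"
  obtain I where I: "I \<subseteq> {1..q}" "card I = q - f"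
    and Imin: "\<And>J. J \<subseteq> {1..q} \<Longrightarrow> card J = q - f \<Longrightarrow> idx_diam x I \<le> idx_diam x J"
    and G: "Gj = (1 / real (q - f)) *\<^sub>R (\<Sum>i\<in>I. x i)"
    using M unfolding is_MDA_def by blast
  have finI: "finite I" using I(1) finite_subset by blast
  have npos: "q - f > 0" using q by simp
  obtain J where J: "J \<subseteq> Hs" "card J = q - f"
    using obtain_subset_with_card_n[of "q-f" Hs] H Hs_def by auto
  have HsQ: "Hs \<subseteq> {1..q}" unfolding Hs_def by auto
  have finJ: "finite J" using J(1) HsQ finite_subset by (metis finite_atLeastAtMost)
  have dJ: "idx_diam x J \<le> D"
    unfolding idx_diam_def
  proof (rule Max.boundedI)
    show "finite {dist (x i) (x j) |i j. i \<in> J \<and> j \<in> J}"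
      by (rule finite_image_set2) (use finJ in auto)
    show "{dist (x i) (x j) |i j. i \<in> J \<and> j \<in> J} \<noteq> {}"
    proof -
      have "J \<noteq> {}" using J(2) npos by auto
      then obtain i where "i \<in> J" by blast
      thus ?thesis by blast
    qed
    fix a assume "a \<in> {dist (x i) (x j) |i j. i \<in> J \<and> j \<in> J}"
    then obtain i j where ij: "i \<in> J" "j \<in> J" "a = dist (x i) (x j)" by blast
    then obtain u v where "u \<in> {1..h}" "v \<in> {1..h}" "x i = g u" "x j = g v"
      using J(1) unfolding Hs_def by blast
    thus "a \<le> D" using ij memD[of u h v g] unfolding D_def by (simp add: dist_norm)
  qed
  have dI: "idx_diam x I \<le> D" using Imin[of J] J(2) subset_trans[OF J(1) HsQ] dJ by linarith
  have "I \<inter> Hs \<noteq> {}"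
  proof
    assume "I \<inter> Hs = {}"
    hence "card (I \<union> Hs) = card I + card Hs"
      using finI HsQ finite_subset[OF HsQ] by (intro card_Un_disjoint) auto
    moreover have "card (I \<union> Hs) \<le> q" using card_mono[of "{1..q}" "I \<union> Hs"] I(1) HsQ by simp
    ultimately show False using I(2) H[folded Hs_def] q by linarith
  qed
  then obtain i0 where i0: "i0 \<in> I" "i0 \<in> Hs" by blast
  then obtain r where r: "r \<in> {1..h}" "x i0 = g r" unfolding Hs_def by blast
  have bnd: "norm (x i - x i0) \<le> D" if "i \<in> I" for i
  proof -
    have "dist (x i) (x i0) \<le> idx_diam x I"
      unfolding idx_diam_def
      by (rule Max_ge) (rule finite_image_set2, use finI that i0 in auto)
    thus ?thesis using dI by (simp add: dist_norm)
  qed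
  have "Gj - g r = (1 / real (q - f)) *\<^sub>R (\<Sum>i\<in>I. (x i - x i0))"
  proof -
    have c: "(\<Sum>i\<in>I. x i0) = real (q - f) *\<^sub>R x i0"
      using I(2) sum_constant_scaleR[of "x i0" I] by (simp del: sum_constant)
    have "(1 / real (q - f)) *\<^sub>R (\<Sum>i\<in>I. (x i - x i0))
        = (1 / real (q - f)) *\<^sub>R (\<Sum>i\<in>I. x i) - (1 / real (q - f)) *\<^sub>R (real (q - f) *\<^sub>R x i0)"
      by (simp only: sum_subtractf c scaleR_diff_right)
    also have "\<dots> = Gj - g r" using G r npos by simp
    finally show ?thesis by simp
  qed
  hence "norm (Gj - g r) = (1 / real (q - f)) * norm (\<Sum>i\<in>I. (x i - x i0))" by simp
  also have "\<dots> \<le> (1 / real (q - f)) * (\<Sum>i\<in>I. norm (x i - x i0))"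
    by (intro mult_left_mono norm_sum) auto
  also have "\<dots> \<le> (1 / real (q - f)) * (real (card I) * D)"
    using sum_bounded_above[of I "\<lambda>i. norm (x i - x i0)" D] bnd
    by (intro mult_left_mono) auto
  also have "\<dots> = D" using I(2) npos by simp
  finally show ?thesis using r D_def by blast
qed

theorem mainTheorem8:
  fixes f q h m :: nat
    and g :: "nat \<Rightarrow> real ^ 'd"
    and y :: "nat \<Rightarrow> nat \<Rightarrow> real ^ 'd"
    and G :: "nat \<Rightarrow> real ^ 'd"
  assumes "f \<ge> 1" and "q \<ge> 2 * f + 1"
    and "\<forall>j\<in>{1..m}. card {i \<in> {1..q}. y j i \<in> g ` {1..h}} \<ge> q - f"
    and "\<forall>j\<in>{1..m}. is_MDA f q (y j) (G j)"
  shows "(\<forall>j\<in>{1..m}. \<exists>r\<in>{1..h}.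
            norm (G j - g r) \<le> Max {norm (g r' - g s) | r' s. r' \<in> {1..h} \<and> s \<in> {1..h}})
       \<and> (\<forall>j\<in>{1..m}. \<forall>k\<in>{1..m}.
            norm (G j - G k) \<le> 3 * Max {norm (g r - g s) | r s. r \<in> {1..h} \<and> s \<in> {1..h}})"
proof -
  define D where "D = Max {norm (g r' - g s) | r' s. r' \<in> {1..h} \<and> s \<in> {1..h}}"
  have A: "\<forall>j\<in>{1..m}. \<exists>r\<in>{1..h}. norm (G j - g r) \<le> D"
    using one[OF assms(2)] assms(3,4) unfolding D_def by blast
  have "norm (G j - G k) \<le> 3 * D" if j: "j \<in> {1..m}" and k: "k \<in> {1..m}" for j k
  proof -
    obtain r where r: "r \<in> {1..h}" "norm (G j - g r) \<le> D" using A j by blast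
    obtain s where s: "s \<in> {1..h}" "norm (G k - g s) \<le> D" using A k by blast
    have rs: "norm (g r - g s) \<le> D" using memD[OF r(1) s(1)] D_def by simp
    have "G j - G k = (G j - g r) + (g r - g s) - (G k - g s)" by simp
    hence "norm (G j - G k) \<le> norm (G j - g r) + norm (g r - g s) + norm (G k - g s)"
      using norm_triangle_ineq4[of "(G j - g r) + (g r - g s)" "G k - g s"]
        norm_triangle_ineq[of "G j - g r" "g r - g s"] by simp
    thus ?thesis using r s rs by linarith
  qed
  thus ?thesis using A unfolding D_def by blast
qed

end
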